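(* Let $n\ge3$ and $y=(y_1,\dots,y_{n-1},q)\in\mathcal J_n$. Then $$\mathcal C_{\widetilde{\mathbb G}_n}(0,y)=\mathcal L_{\widetilde{\mathbb G}_n}(0,y)=\max_{1\le j\le n-1}\tanh^{-1}\left(\frac{\binom nj|y_j-\bar y_{n-j}q|+|y_jy_{n-j}-\binom nj^2q|}{\binom nj^2-|y_{n-j}|^2}\right),$$ where $0=(0,\dots,0)$.
   Context: $\mathbb D$ open unit disc. $\widetilde{\mathbb G}_n=\{(y_1,\dots,y_{n-1},q)\in\mathbb C^n: q\in\mathbb D,\ y_j=\beta_j+\bar\beta_{n-j}q$ with $\beta_j\in\mathbb C$, $|\beta_j|+|\beta_{n-j}|<\binom nj$, $j=1,\dots,n-1\}$. $\mathcal J_n$: for $n$ odd, the set of $y\in\widetilde{\mathbb G}_n$ with $y_j=\frac{\binom nj}ny_1$, $y_{n-j}=\frac{\binom nj}ny_{n-1}$ for $j=2,\dots,[n/2]$; for $n$ even, the set of $y\in\widetilde{\mathbb G}_n$ with $y_{n/2}=\frac{\binom{n}{n/2}}n\cdot\frac{y_1+y_{n-1}}2$ and $y_j=\frac{\binom nj}ny_1$, $y_{n-j}=\frac{\binom nj}ny_{n-1}$ for $j=2,\dots,n/2-1$. $\rho$ is the hyperbolic distance on $\mathbb D$, $\rho(a,b)=\tanh^{-1}\left|\frac{a-b}{1-\bar ba}\right|$. For a domain $\Omega$ and $z,w\in\Omega$: Carathéodory pseudodistance $\mathcal C_\Omega(z,w)=\sup\{\rho(f(z),f(w)): f:\Omega\to\mathbb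 D\text{ holomorphic}\}$; Lempert function $\mathcal L_\Omega(z,w)=\inf\{\rho(\alpha,\beta):\exists f:\mathbb D\to\Omega\text{ holomorphic},\ f(\alpha)=z,\ f(\beta)=w\}$. *)

theory Defs
  imports "HOL-Analysis.Analysis"
begin

text \<open>Points of C^n are modelled as vectors of type complex^'n, where the
finite index type 'n is identified with {1..n} via a bijection idx.
Coordinate j (1 \<le> j \<le> n) of z is z $ (inv idx j); coordinate n is q.\<close>

definition coord :: "('n \<Rightarrow> nat) \<Rightarrow> complex^'n \<Rightarrow> nat \<Rightarrow> complex" where
  "coord idx z j = z $ (inv idx j)"

definition cbin :: "nat \<Rightarrow> nat \<Rightarrow> complex" where
  "cbin n j = of_nat (n choose j)"

definition Gtilde :: "nat \<Rightarrow> ('n \<Rightarrow> nat) \<Rightarrow> (complex^'n) set" where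
  "Gtilde n idx = {z. norm (coord idx z n) < 1 \<and>
     (\<exists>\<beta> :: nat \<Rightarrow> complex. \<forall>j\<in>{1..n-1}.
        coord idx z j = \<beta> j + cnj (\<beta> (n - j)) * coord idx z n \<and>
        norm (\<beta> j) + norm (\<beta> (n - j)) < real (n choose j))}"

definition Jset :: "nat \<Rightarrow> ('n \<Rightarrow> nat) \<Rightarrow> (complex^'n) set" where
  "Jset n idx = {z \<in> Gtilde n idx.
     (if odd n then
        (\<forall>j\<in>{2..n div 2}. coord idx z j = cbin n j / of_nat n * coord idx z 1 \<and>
                          coord idx z (n - j) = cbin n j / of_nat n * coord idx z (n - 1))
      else
        coord idx z (n div 2) = cbin n (n div 2) / of_nat n *
              ((coord idx z 1 + coord idx z (n - 1)) / 2) \<and>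
        (\<forall>j\<in>{2..n div 2 - 1}. coord idx z j = cbin n j / of_nat n * coord idx z 1 \<and>
                          coord idx z (n - j) = cbin n j / of_nat n * coord idx z (n - 1)))}"

definition hrho :: "complex \<Rightarrow> complex \<Rightarrow> real" where
  "hrho a b = artanh (norm ((a - b) / (1 - cnj b * a)))"

definition cscale :: "complex \<Rightarrow> complex^'n \<Rightarrow> complex^'n" where
  "cscale c v = (\<chi> i. c * v $ i)"

definition holo_on :: "(complex^'n \<Rightarrow> complex) \<Rightarrow> (complex^'n) set \<Rightarrow> bool" where
  "holo_on f S \<longleftrightarrow> (\<forall>z\<in>S. \<exists>D. (f has_derivative D) (at z) \<and>
       (\<forall>c v. D (cscale c v) = c * D v))"

definition holo_curve_on :: "(complex \<Rightarrow> complex^'n) \<Rightarrow> complex set \<Rightarrow> bool" where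
  "holo_curve_on g S \<longleftrightarrow> (\<forall>i. (\<lambda>t. g t $ i) holomorphic_on S)"

definition caratheodory :: "(complex^'n) set \<Rightarrow> complex^'n \<Rightarrow> complex^'n \<Rightarrow> ereal" where
  "caratheodory \<Omega> z w =
     (SUP f \<in> {f. holo_on f \<Omega> \<and> f ` \<Omega> \<subseteq> ball 0 1}. ereal (hrho (f z) (f w)))"

definition lempert :: "(complex^'n) set \<Rightarrow> complex^'n \<Rightarrow> complex^'n \<Rightarrow> ereal" where
  "lempert \<Omega> z w =
     (INF ab \<in> {(a, b). a \<in> ball 0 1 \<and> b \<in> ball 0 1 \<and>
                 (\<exists>g. holo_curve_on g (ball 0 1) \<and> g ` ball 0 1 \<subseteq> \<Omega> \<and> g a = z \<and> g b = w)}.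
        ereal (hrho (fst ab) (snd ab)))"

end

theory Submission
  imports Defs "HOL-Complex_Analysis.Complex_Analysis"
begin

lemma cnorm_sq: "complex_of_real ((norm z)^2) = z * cnj z"
  by (rule complex_norm_square)

lemma cnorm_sq2: "(complex_of_real (norm z))^2 = z * cnj z"
  by (metis cnorm_sq of_real_power)

lemma psi_identity:
  fixes b1 b2 q w :: complex and c :: real
  assumes "w * cnj w = 1"
  shows "(norm ((b2 + cnj b1 * q) * w - c))^2 - (norm (c * q * w - (b1 + cnj b2 * q)))^2
       = (1 - (norm q)^2) * ((norm (c - b2 * w))^2 - (norm b1)^2)"
proof -
  have "complex_of_real ((norm ((b2 + cnj b1 * q) * w - c))^2 - (norm (c * q * w - (b1 + cnj b2 * q)))^2)
     = complex_of_real ((1 - (norm q)^2) * ((norm (c - b2 * w))^2 - (norm b1)^2))"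
    unfolding of_real_diff of_real_mult cnorm_sq of_real_1
    using assms by (simp add: algebra_simps) algebra
  then show ?thesis using of_real_eq_iff by blast
qed

lemma unit_cnj: "norm w = 1 \<Longrightarrow> w * cnj w = 1"
  by (metis cnorm_sq of_real_1 power_one)

lemma psi_bound:
  fixes b1 b2 q w u v :: complex and c :: real
  assumes u: "u = b1 + cnj b2 * q" and v: "v = b2 + cnj b1 * q"
    and bc: "norm b1 + norm b2 < c" and q: "norm q < 1" and w: "norm w = 1"
  shows "v * w - c \<noteq> 0" "norm ((c * q * w - u) / (v * w - c)) < 1"
proof -
  have "norm (complex_of_real c - b2 * w) \<ge> c - norm b2"
  proof -
    have "norm (complex_of_real c) \<le> norm (complex_of_real c - b2 * w) + norm (b2 * w)"
      by (metis add.commute diff_add_cancel norm_triangle_ineq)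
    moreover have "norm (complex_of_real c) = c" using bc by (simp add: abs_of_nonneg add_nonneg_eq_0_iff)
      (smt (verit) norm_ge_zero)
    ultimately show ?thesis using w by (simp add: norm_mult)
  qed
  then have "norm (complex_of_real c - b2 * w) > norm b1" using bc by linarith
  then have "(norm (complex_of_real c - b2 * w))^2 - (norm b1)^2 > 0"
    by (meson diff_gt_0_iff_gt norm_ge_zero power_strict_mono zero_less_numeral)
  moreover have "1 - (norm q)^2 > 0" using q
    by (simp add: power_less_one_iff)
  ultimately have "(norm (v * w - c))^2 - (norm (c * q * w - u))^2 > 0"
    using psi_identity[OF unit_cnj[OF w], of b2 b1 q c] u v by simp
  then have lt: "norm (c * q * w - u) < norm (v * w - c)"
    by (simp add: power_less_imp_less_base)
  then show "v * w - c \<noteq> 0" by auto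
  then show "norm ((c * q * w - u) / (v * w - c)) < 1"
    using lt by (simp add: norm_divide divide_less_eq)
qed

lemma align_unit:
  fixes K L :: complex
  obtains z where "norm z = 1" "norm (K + L * z) = norm K + norm L"
proof (cases "L = 0")
  case True then show ?thesis using that[of 1] by simp
next
  case L: False
  show ?thesis
  proof (cases "K = 0")
    case True
    then show ?thesis using that[of "cnj L / norm L"] L
      by (simp add: norm_divide complex_norm_square[symmetric] power2_eq_square)
  next
    case K: False
    define z where "z = K * cnj L / (norm K * norm L)"
    have nz: "norm z = 1" using K L by (simp add: z_def norm_mult norm_divide)
    have "L * z = complex_of_real (norm L / norm K) * K"
      using K L unfolding z_def
      by (simp add: field_simps complex_norm_square[symmetric] power2_eq_square)
    then have "K + L * z = complex_of_real (1 + norm L / norm K) * K" by (simp add: algebra_simps)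
    then have "norm (K + L * z) = (1 + norm L / norm K) * norm K"
      by (simp only: norm_mult norm_of_real) (simp add: abs_of_nonneg)
    also have "\<dots> = norm K + norm L" using K by (simp add: field_simps)
    finally show ?thesis using that nz by blast
  qed
qed

lemma psi_attain:
  fixes u v q :: complex and c :: real
  assumes vc: "norm v < c"
  shows "\<exists>w. norm w = 1 \<and> norm ((c * q * w - u) / (v * w - c))
           = (c * norm (u - cnj v * q) + norm (u * v - (complex_of_real c)^2 * q)) / (c^2 - (norm v)^2)"
proof -
  have c0: "c > 0" using vc by (meson le_less_trans norm_ge_zero)
  have den: "c^2 - (norm v)^2 > 0" using vc
    by (simp add: power_strict_mono)
  define K where "K = c * (u - cnj v * q) / (c^2 - v * cnj v)"
  define L where "L = (u * v - c^2 * q) / (c^2 - v * cnj v)"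
  have dd: "complex_of_real (c^2 - (norm v)^2) = c^2 - v * cnj v"
    unfolding of_real_diff cnorm_sq by simp
  have dnz: "(complex_of_real c)^2 - v * cnj v \<noteq> 0"
    using den dd by (metis of_real_eq_0_iff of_real_power less_irrefl)
  have nK: "norm K = c * norm (u - cnj v * q) / (c^2 - (norm v)^2)"
    unfolding K_def dd[symmetric] norm_mult norm_divide norm_of_real using c0 den by (simp add: abs_of_pos)
  have nL: "norm L = norm (u * v - (complex_of_real c)^2 * q) / (c^2 - (norm v)^2)"
    unfolding L_def dd[symmetric] norm_divide norm_of_real using den by simp
  obtain z where z: "norm z = 1" "norm (K + L * z) = norm K + norm L"
    using align_unit by blast
  have zc: "z * cnj z = 1" using unit_cnj[OF z(1)] .
  have cvz: "complex_of_real c + v * z \<noteq> 0"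
  proof
    assume "complex_of_real c + v * z = 0"
    then have "norm (complex_of_real c) = norm (v * z)" by (metis add_eq_0_iff norm_minus_cancel)
    then show False using vc z(1) c0 by (simp add: norm_mult)
  qed
  define w where "w = (c * z + cnj v) / (c + v * z)"
  have nw: "norm w = 1"
  proof -
    have "c * z + cnj v = z * cnj (c + v * z)" using zc by (simp add: algebra_simps)
    then have "norm (c * z + cnj v) = norm z * norm (cnj (complex_of_real c + v * z))"
      by (simp only: norm_mult)
    then have "norm (c * z + cnj v) = norm (c + v * z)"
      using z(1) by (simp only: complex_mod_cnj mult_1)
    then show ?thesis unfolding w_def using cvz by (simp add: norm_divide)
  qed
  have vwc: "v * w - c = (v * cnj v - c^2) / (c + v * z)"
    unfolding w_def using cvz by (simp add: field_simps power2_eq_square)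
  have num: "c * q * w - u = (c * q * (c * z + cnj v) - u * (c + v * z)) / (c + v * z)"
    unfolding w_def using cvz by (simp add: field_simps)
  have "(c * q * w - u) / (v * w - c) = (c * q * (c * z + cnj v) - u * (c + v * z)) / (v * cnj v - c^2)"
    unfolding num vwc using cvz by simp
  also have "\<dots> = (c * (u - cnj v * q) + (u * v - c^2 * q) * z) / (c^2 - v * cnj v)"
  proof -
    have e: "v * cnj v - c^2 = - (c^2 - v * cnj v)" by simp
    show ?thesis unfolding e by (simp add: divide_simps algebra_simps power2_eq_square)
  qed
  also have "\<dots> = K + L * z" unfolding K_def L_def by (simp add: add_divide_distrib)
  finally have "(c * q * w - u) / (v * w - c) = K + L * z" .
  then show ?thesis using nw z(2) nK nL by (auto simp: add_divide_distrib)
qed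

definition tetra :: "complex \<Rightarrow> complex \<Rightarrow> complex \<Rightarrow> bool" where
  "tetra u v q \<longleftrightarrow> norm q < 1 \<and> 2 * norm (u * v - q) < 1 - (norm u)^2 - (norm v)^2 + (norm q)^2"

lemma tetra_sym: "tetra u v q \<longleftrightarrow> tetra v u q"
  unfolding tetra_def by (auto simp: mult.commute)

lemma tetra_I1:
  "(norm (u - cnj v * q))^2 - (norm (v - cnj u * q))^2 = ((norm u)^2 - (norm v)^2) * (1 - (norm q)^2)"
proof -
  have "complex_of_real ((norm (u - cnj v * q))^2 - (norm (v - cnj u * q))^2) =
        complex_of_real (((norm u)^2 - (norm v)^2) * (1 - (norm q)^2))"
    unfolding of_real_diff of_real_mult cnorm_sq of_real_1
    by (simp only: complex_cnj_diff complex_cnj_mult complex_cnj_cnj complex_cnj_add) algebra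
  then show ?thesis using of_real_eq_iff by blast
qed

lemma tetra_I2:
  "(1 - (norm q)^2)^2 - (norm (u - cnj v * q))^2 - (norm (v - cnj u * q))^2
   = (1 + (norm q)^2) * (1 + (norm q)^2 - (norm u)^2 - (norm v)^2)
     + 2 * ((norm u)^2 * (norm v)^2 - (norm q)^2 - (norm (u * v - q))^2)"
proof -
  have "complex_of_real ((1 - (norm q)^2)^2 - (norm (u - cnj v * q))^2 - (norm (v - cnj u * q))^2)
   = complex_of_real ((1 + (norm q)^2) * (1 + (norm q)^2 - (norm u)^2 - (norm v)^2)
     + 2 * ((norm u)^2 * (norm v)^2 - (norm q)^2 - (norm (u * v - q))^2))"
    apply (simp only: of_real_diff of_real_mult of_real_add of_real_1 of_real_numeral cnorm_sq)
    apply (simp only: of_real_power of_real_diff of_real_1 cnorm_sq cnorm_sq2)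
    apply (simp only: complex_cnj_diff complex_cnj_mult complex_cnj_cnj complex_cnj_add complex_cnj_one)
    by algebra
  then show ?thesis using of_real_eq_iff by blast
qed

lemma tetra_I4:
  "(norm u)^2 * (norm v)^2 - (norm q)^2 - (norm (u * v - q))^2 = 2 * Re (cnj q * (u * v - q))"
proof -
  have "complex_of_real ((norm u)^2 * (norm v)^2 - (norm q)^2 - (norm (u * v - q))^2)
      = cnj q * (u * v - q) + cnj (cnj q * (u * v - q))"
    unfolding of_real_diff of_real_mult cnorm_sq by (simp add: algebra_simps)
  also have "\<dots> = complex_of_real (2 * Re (cnj q * (u * v - q)))"
    by (rule complex_add_cnj)
  finally show ?thesis using of_real_eq_iff by blast
qed

lemma tetra_beta:
  fixes u v q :: complex
  assumes "tetra u v q"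
  shows "\<exists>B1 B2. u = B1 + cnj B2 * q \<and> v = B2 + cnj B1 * q \<and> norm B1 + norm B2 < 1"
proof -
  have q: "norm q < 1" and m: "2 * norm (u * v - q) < 1 - (norm u)^2 - (norm v)^2 + (norm q)^2"
    using assms unfolding tetra_def by auto
  define P where "P = u - cnj v * q"
  define Q where "Q = v - cnj u * q"
  define R where "R = 1 - (norm q)^2"
  define X where "X = (norm P)^2"
  define Y where "Y = (norm Q)^2"
  define U where "U = (norm u)^2"
  define V where "V = (norm v)^2"
  define Q2 where "Q2 = (norm q)^2"
  define p2 where "p2 = (norm (u * v - q))^2"
  define mm where "mm = 1 + Q2 - U - V"
  define A where "A = R^2 - X - Y"
  have R0: "R > 0" unfolding R_def using q by (simp add: power_less_one_iff)
  have h1: "X - Y = (U - V) * R" unfolding X_def Y_def U_def V_def R_def P_def Q_def using tetra_I1 .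
  have h2: "A = (1 + Q2) * mm + 2 * (U * V - Q2 - p2)"
    unfolding A_def X_def Y_def U_def V_def R_def P_def Q_def mm_def Q2_def p2_def using tetra_I2
    by simp
  have mp: "mm > 2 * norm (u * v - q)" using m unfolding mm_def U_def V_def Q2_def by simp
  have pos_p: "norm (u * v - q) \<ge> 0" by simp
  have re: "2 * (U * V - Q2 - p2) \<ge> - 4 * norm q * norm (u * v - q)"
  proof -
    have "U * V - Q2 - p2 = 2 * Re (cnj q * (u * v - q))"
      unfolding U_def V_def Q2_def p2_def using tetra_I4 .
    moreover have "Re (cnj q * (u * v - q)) \<ge> - norm (cnj q * (u * v - q))"
      by (metis abs_Re_le_cmod abs_le_iff minus_le_iff)
    ultimately show ?thesis by (simp add: norm_mult)
  qed
  have nq: "1 + Q2 \<ge> 2 * norm q"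
  proof -
    have "(1 - norm q)^2 \<ge> 0" by simp
    then show ?thesis unfolding Q2_def by (simp add: power2_eq_square algebra_simps)
  qed
  have A0: "A > 0"
  proof -
    have "(1 + Q2) * mm > (1 + Q2) * (2 * norm (u * v - q))"
      using mp unfolding Q2_def by (intro mult_strict_left_mono) (auto simp: add_pos_nonneg)
    moreover have "(1 + Q2) * (2 * norm (u * v - q)) \<ge> 2 * norm q * (2 * norm (u * v - q))"
      using nq pos_p by (intro mult_right_mono) auto
    ultimately show ?thesis using h2 re by linarith
  qed
  have h3: "A^2 - 4 * X * Y = R^2 * (mm^2 - 4 * p2)"
  proof -
    have RR: "R = 1 - Q2" unfolding R_def Q2_def ..
    have AA: "A = R^2 - X - Y" unfolding A_def ..
    show ?thesis using h1 h2 RR AA unfolding mm_def by algebra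
  qed
  have "mm^2 - 4 * p2 > 0"
  proof -
    have "mm^2 > (2 * norm (u * v - q))^2" using mp pos_p
      by (meson le_less_trans mult_nonneg_nonneg power_strict_mono zero_le_numeral zero_less_numeral)
    then show ?thesis unfolding p2_def by (simp add: power_mult_distrib)
  qed
  then have "A^2 > 4 * X * Y" using h3 R0 by (smt (verit) mult_pos_pos zero_less_power)
  then have "A^2 > (2 * (norm P * norm Q))^2" unfolding X_def Y_def by (simp add: power_mult_distrib)
  then have "A > 2 * (norm P * norm Q)" using A0
    by (meson power_less_imp_less_base less_imp_le)
  then have "R^2 > (norm P + norm Q)^2"
    unfolding A_def X_def Y_def by (simp add: power2_eq_square algebra_simps)
  then have lt: "R > norm P + norm Q" using R0 by (meson power_less_imp_less_base less_imp_le)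
  define B1 where "B1 = P / complex_of_real R"
  define B2 where "B2 = Q / complex_of_real R"
  have Rc: "complex_of_real R = 1 - q * cnj q" unfolding R_def of_real_diff cnorm_sq by simp
  have Rnz: "complex_of_real R \<noteq> 0" using R0 by simp
  have e1: "u = B1 + cnj B2 * q"
  proof -
    have "P + cnj Q * q = u * complex_of_real R" unfolding P_def Q_def Rc by (simp add: algebra_simps)
    then show ?thesis unfolding B1_def B2_def using Rnz by (simp add: field_simps)
  qed
  have e2: "v = B2 + cnj B1 * q"
  proof -
    have "Q + cnj P * q = v * complex_of_real R" unfolding P_def Q_def Rc by (simp add: algebra_simps)
    then show ?thesis unfolding B1_def B2_def using Rnz by (simp add: field_simps)
  qed
  have "norm B1 + norm B2 = (norm P + norm Q) / R"
    unfolding B1_def B2_def using R0 by (simp add: norm_divide add_divide_distrib)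
  also have "\<dots> < 1" using lt R0 by simp
  finally show ?thesis using e1 e2 by blast
qed

definition T1 :: "complex \<Rightarrow> complex \<Rightarrow> complex \<Rightarrow> real" where
  "T1 u v q = (norm (u - cnj v * q) + norm (u * v - q)) / (1 - (norm v)^2)"

lemma norm_1_minus_real: "(\<sigma>::real) \<le> 1 \<Longrightarrow> norm (1 - complex_of_real \<sigma>) = 1 - \<sigma>"
  by (metis abs_of_nonneg diff_ge_0_iff_ge norm_of_real of_real_1 of_real_diff)

lemma phi_identity:
  fixes s x y \<sigma> :: real
  shows "((1 - \<sigma> * x)^2 + \<sigma>^2 * y^2) - (1 - \<sigma>)^2 * s^2 - (1 - \<sigma>)^2 * (x^2 + y^2)
         + s^2 * ((x - \<sigma>)^2 + y^2) - 2 * \<sigma> * s * ((1 - x)^2 + y^2)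
       = (1 - s) * ((1 - \<sigma>) * (1 - (x^2 + y^2)) * (1 + s) + \<sigma> * (1 - s) * ((1 - x)^2 + y^2))"
  by algebra

lemma disc_tetra:
  fixes w k lam :: complex and \<sigma> :: real
  assumes w: "norm w = 1" and k: "norm k \<le> 1" and s0: "0 \<le> \<sigma>" and s1: "\<sigma> < 1"
    and l: "norm lam < 1"
  shows "1 - w * complex_of_real \<sigma> * k * lam \<noteq> 0"
    and "tetra ((1 - complex_of_real \<sigma>) * lam / (1 - w * complex_of_real \<sigma> * k * lam))
               (k * (1 - complex_of_real \<sigma>) * lam / (1 - w * complex_of_real \<sigma> * k * lam))
               (lam * (k * lam - cnj w * complex_of_real \<sigma>) / (1 - w * complex_of_real \<sigma> * k * lam))"
proof -
  define t where "t = w * k * lam"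
  define D where "D = 1 - w * complex_of_real \<sigma> * k * lam"
  define s where "s = norm lam"
  have wc: "w * cnj w = 1" using unit_cnj[OF w] .
  have nt: "norm t = norm k * s" unfolding t_def s_def using w by (simp add: norm_mult)
  have nts: "norm t \<le> s" unfolding nt s_def using k by (simp add: mult_left_le_one_le)
  have s1': "s < 1" unfolding s_def using l .
  have t1: "norm t < 1" using nts s1' by linarith
  have Dt: "D = 1 - \<sigma> * t" unfolding D_def t_def by (simp add: algebra_simps)
  have Dsq: "(norm D)^2 = (1 - \<sigma> * Re t)^2 + \<sigma>^2 * (Im t)^2"
    unfolding Dt cmod_power2 by (simp add: power_mult_distrib)
  have tsq: "(norm (t - \<sigma>))^2 = (Re t - \<sigma>)^2 + (Im t)^2" unfolding cmod_power2 by simp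
  have t1sq: "(norm (1 - t))^2 = (1 - Re t)^2 + (Im t)^2" unfolding cmod_power2 by simp
  have ttsq: "(norm t)^2 = (Re t)^2 + (Im t)^2" unfolding cmod_power2 by simp
  have "norm (\<sigma> * t) < 1"
    using s0 s1 t1 by (simp add: norm_mult abs_of_nonneg) (metis mult_le_one less_eq_real_def norm_ge_zero le_less_trans mult_strict_mono' zero_le_one mult_1 less_le_not_le not_less order.strict_trans1 mult_less_cancel_right2)
  then have Dnz: "D \<noteq> 0" unfolding Dt by (metis norm_one right_minus_eq less_irrefl)
  then show "1 - w * complex_of_real \<sigma> * k * lam \<noteq> 0" unfolding D_def .
  have Dpos: "(norm D)^2 > 0" using Dnz by simp
  have Phi: "(norm D)^2 - (1 - \<sigma>)^2 * s^2 - (1 - \<sigma>)^2 * (norm t)^2 + s^2 * (norm (t - \<sigma>))^2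
             - 2 * \<sigma> * s * (norm (1 - t))^2
           = (1 - s) * ((1 - \<sigma>) * (1 - (norm t)^2) * (1 + s) + \<sigma> * (1 - s) * (norm (1 - t))^2)"
    unfolding Dsq tsq t1sq ttsq by (rule phi_identity)
  have Phipos: "(1 - s) * ((1 - \<sigma>) * (1 - (norm t)^2) * (1 + s) + \<sigma> * (1 - s) * (norm (1 - t))^2) > 0"
  proof -
    have "(1 - (norm t)^2) > 0" using t1 by (simp add: power_less_one_iff)
    then have "(1 - \<sigma>) * (1 - (norm t)^2) * (1 + s) > 0" using s1 s_def
      by (simp add: add_pos_nonneg)
    moreover have "\<sigma> * (1 - s) * (norm (1 - t))^2 \<ge> 0" using s0 s1' by simp
    ultimately show ?thesis using s1' by (simp add: add_pos_nonneg)
  qed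
  define g1 where "g1 = (1 - complex_of_real \<sigma>) * lam / D"
  define g2 where "g2 = k * (1 - complex_of_real \<sigma>) * lam / D"
  define g3 where "g3 = lam * (k * lam - cnj w * complex_of_real \<sigma>) / D"
  have n1: "norm g1 = (1 - \<sigma>) * s / norm D" unfolding g1_def s_def using s1
    by (simp add: norm_mult norm_divide norm_1_minus_real)
  have n2: "norm g2 = (1 - \<sigma>) * norm t / norm D" unfolding g2_def nt s_def using s1
    by (simp add: norm_mult norm_divide norm_1_minus_real)
  have kl: "norm (k * lam - cnj w * complex_of_real \<sigma>) = norm (t - \<sigma>)"
  proof -
    have "t - \<sigma> = w * (k * lam - cnj w * complex_of_real \<sigma>)" unfolding t_def using wc by (simp add: algebra_simps)
    then show ?thesis using w by (simp add: norm_mult)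
  qed
  have n3: "norm g3 = s * norm (t - \<sigma>) / norm D" unfolding g3_def s_def
    by (simp add: norm_mult norm_divide kl)
  have g123: "g1 * g2 - g3 = \<sigma> * lam * cnj w * (1 - t)^2 / D^2"
  proof -
    have "(1 - complex_of_real \<sigma>) * lam * (k * (1 - complex_of_real \<sigma>) * lam) - lam * (k * lam - cnj w * complex_of_real \<sigma>) * D
          = \<sigma> * lam * cnj w * (1 - t)^2"
      unfolding D_def t_def using wc by (simp add: algebra_simps power2_eq_square) algebra
    moreover have "g1 * g2 - g3 = ((1 - complex_of_real \<sigma>) * lam * (k * (1 - complex_of_real \<sigma>) * lam) - lam * (k * lam - cnj w * complex_of_real \<sigma>) * D) / D^2"
      unfolding g1_def g2_def g3_def using Dnz by (simp add: field_simps power2_eq_square)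
    ultimately show ?thesis by simp
  qed
  have n4: "norm (g1 * g2 - g3) = \<sigma> * s * (norm (1 - t))^2 / (norm D)^2"
    unfolding g123 s_def using w s0 by (simp add: norm_mult norm_divide norm_power abs_of_nonneg)
  have tsl: "norm (t - \<sigma>) < norm D"
  proof -
    have "(norm D)^2 - (norm (t - \<sigma>))^2 = (1 - \<sigma>^2) * (1 - (norm t)^2)"
      unfolding Dsq tsq ttsq by algebra
    moreover have "(1 - \<sigma>^2) * (1 - (norm t)^2) > 0"
      using s0 s1 t1 by (simp add: power_less_one_iff abs_of_nonneg)
    ultimately have "(norm (t - \<sigma>))^2 < (norm D)^2" by linarith
    then show ?thesis by (meson norm_ge_zero power_less_imp_less_base)
  qed
  have g3lt: "norm g3 < 1"
  proof -
    have "norm g3 \<le> norm (t - \<sigma>) / norm D" unfolding n3 using s1' s_def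
      by (simp add: divide_right_mono mult_left_le_one_le)
    also have "\<dots> < 1" using tsl Dnz by simp
    finally show ?thesis .
  qed
  have main: "2 * norm (g1 * g2 - g3) < 1 - (norm g1)^2 - (norm g2)^2 + (norm g3)^2"
  proof -
    have "1 - (norm g1)^2 - (norm g2)^2 + (norm g3)^2 - 2 * norm (g1 * g2 - g3)
        = ((norm D)^2 - (1 - \<sigma>)^2 * s^2 - (1 - \<sigma>)^2 * (norm t)^2 + s^2 * (norm (t - \<sigma>))^2
             - 2 * \<sigma> * s * (norm (1 - t))^2) / (norm D)^2"
      unfolding n1 n2 n3 n4 using Dnz by (simp add: field_simps power2_eq_square)
    also have "\<dots> > 0" using Phi Phipos Dpos by simp
    finally show ?thesis by simp
  qed
  show "tetra ((1 - complex_of_real \<sigma>) * lam / (1 - w * complex_of_real \<sigma> * k * lam))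
               (k * (1 - complex_of_real \<sigma>) * lam / (1 - w * complex_of_real \<sigma> * k * lam))
               (lam * (k * lam - cnj w * complex_of_real \<sigma>) / (1 - w * complex_of_real \<sigma> * k * lam))"
    using main g3lt unfolding tetra_def g1_def g2_def g3_def D_def by simp
qed

lemma Re_ofreal_mult: "Re (complex_of_real c * x) = c * Re x"
  by simp

lemma cancel_lem: "(b::complex) \<noteq> 0 \<Longrightarrow> d \<noteq> 0 \<Longrightarrow> x * b * y / d * (d / b) = x * y"
  by (simp add: field_simps)

lemma disc_interp:
  fixes a1 a2 a3 :: complex
  assumes a1: "a1 \<noteq> 0" and le: "norm a2 \<le> norm a1" and a2: "norm a2 < 1"
    and a3: "norm a3 < 1" and T: "T1 a1 a2 a3 < 1"
  shows "\<exists>w (\<sigma>::real) lam0. norm w = 1 \<and> 0 \<le> \<sigma> \<and> \<sigma> < 1 \<and> norm lam0 = T1 a1 a2 a3 \<and>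
     (1 - complex_of_real \<sigma>) * lam0 / (1 - w * complex_of_real \<sigma> * (a2 / a1) * lam0) = a1 \<and>
     (a2 / a1) * (1 - complex_of_real \<sigma>) * lam0 / (1 - w * complex_of_real \<sigma> * (a2 / a1) * lam0) = a2 \<and>
     lam0 * ((a2 / a1) * lam0 - cnj w * complex_of_real \<sigma>) / (1 - w * complex_of_real \<sigma> * (a2 / a1) * lam0) = a3"
proof -
  define den where "den = 1 - (norm a2)^2"
  have den0: "den > 0" unfolding den_def using a2 by (simp add: power_less_one_iff)
  define d where "d = 1 - a2 * cnj a2"
  have dc: "complex_of_real den = d" unfolding den_def d_def of_real_diff cnorm_sq by simp
  have dcnz: "d \<noteq> 0" using den0 dc by (metis of_real_eq_0_iff less_irrefl)
  define K where "K = (a1 - cnj a2 * a3) / d"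
  define L where "L = (a1 * a2 - a3) / d"
  define T where "T = norm K + norm L"
  have TT: "T = T1 a1 a2 a3"
    unfolding T_def T1_def K_def L_def dc[symmetric] norm_divide norm_of_real using den0
    by (simp add: add_divide_distrib den_def)
  have Knz: "K \<noteq> 0"
  proof
    assume "K = 0"
    then have e: "a1 = cnj a2 * a3" unfolding K_def using dcnz by simp
    show False
    proof (cases "a2 = 0")
      case True then show ?thesis using e a1 by simp
    next
      case False
      then have "norm a1 < norm a2" using e False a3 by (simp add: norm_mult mult_strict_left_mono)
      then show False using le by simp
    qed
  qed
  have Kpos: "norm K > 0" using Knz by simp
  have Tpos: "T > 0" unfolding T_def using Kpos by (simp add: add_pos_nonneg)
  obtain z where z1: "norm z = 1" and zK: "complex_of_real (norm K * norm L) * z = K * cnj L"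
    and zL: "L * z = complex_of_real (norm L / norm K) * K"
  proof (cases "L = 0")
    case True then show ?thesis using that[of 1] by simp
  next
    case L: False
    define z where "z = K * cnj L / (norm K * norm L)"
    have "norm z = 1" using Knz L by (simp add: z_def norm_mult norm_divide)
    moreover have "complex_of_real (norm K * norm L) * z = K * cnj L" using Knz L by (simp add: z_def)
    moreover have "L * z = complex_of_real (norm L / norm K) * K"
      using Knz L unfolding z_def
      by (simp add: field_simps complex_norm_square[symmetric] power2_eq_square)
    ultimately show ?thesis using that by blast
  qed
  have zc: "z * cnj z = 1" using unit_cnj[OF z1] .
  define lam0 where "lam0 = K + L * z"
  have lam0': "lam0 = complex_of_real (T / norm K) * K"
    unfolding lam0_def zL T_def using Kpos by (simp add: field_simps add_pos_nonneg)
  have nlam0: "norm lam0 = T" unfolding lam0' norm_mult norm_of_real using Kpos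
    by (simp add: T_def abs_of_nonneg)
  have a2z: "1 + a2 * z \<noteq> 0"
  proof
    assume "1 + a2 * z = 0"
    then have "norm (a2 * z) = 1" by (metis add_eq_0_iff norm_minus_cancel norm_one)
    then show False using a2 z1 by (simp add: norm_mult)
  qed
  define w where "w = (z + cnj a2) / (1 + a2 * z)"
  have nw: "norm w = 1"
  proof -
    have "z + cnj a2 = z * cnj (1 + a2 * z)" using zc by (simp add: algebra_simps)
    then have "norm (z + cnj a2) = norm z * norm (cnj (1 + a2 * z))" by (simp only: norm_mult)
    then have "norm (z + cnj a2) = norm (1 + a2 * z)" using z1 by (simp only: complex_mod_cnj mult_1)
    then show ?thesis unfolding w_def using a2z by (simp add: norm_divide)
  qed
  have wc: "w * cnj w = 1" using unit_cnj[OF nw] .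
  have a1K: "a1 = K - cnj a2 * L"
  proof -
    have "K - cnj a2 * L = ((a1 - cnj a2 * a3) - cnj a2 * (a1 * a2 - a3)) / d"
      unfolding K_def L_def using dcnz by (simp add: field_simps)
    also have "\<dots> = a1 * d / d"
      by (rule arg_cong[where f="\<lambda>x. x / d"]) (simp add: algebra_simps d_def)
    also have "\<dots> = a1" using dcnz by simp
    finally show ?thesis by simp
  qed
  define \<sigma> where "\<sigma> = norm L * (norm (1 + a2 * z))^2 / (T * den)"
  have s0: "\<sigma> \<ge> 0" unfolding \<sigma>_def using Tpos den0 by simp
  have s1: "\<sigma> < 1"
  proof -
    define r where "r = Re (a2 * K * cnj L)"
    have F1: "(norm (1 + a2 * z))^2 = 1 + (norm a2)^2 + 2 * Re (a2 * z)"
    proof -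
      have "complex_of_real ((norm (1 + a2 * z))^2) = complex_of_real (1 + (norm a2)^2) + (a2 * z + cnj (a2 * z))"
        unfolding cnorm_sq of_real_add of_real_1 using zc by (simp add: algebra_simps)
      then show ?thesis unfolding complex_add_cnj by (metis of_real_add of_real_eq_iff)
    qed
    have F2: "norm K * norm L * Re (a2 * z) = r"
    proof -
      have "a2 * (complex_of_real (norm K * norm L) * z) = a2 * (K * cnj L)" using zK by simp
      then have "complex_of_real (norm K * norm L) * (a2 * z) = a2 * K * cnj L"
        by (simp only: ac_simps)
      then have "Re (complex_of_real (norm K * norm L) * (a2 * z)) = r" unfolding r_def by (rule arg_cong)
      moreover have "Re (complex_of_real (norm K * norm L) * (a2 * z)) = norm K * norm L * Re (a2 * z)"
        by (rule Re_ofreal_mult)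
      ultimately show ?thesis by simp
    qed
    have F3: "(norm a1)^2 = (norm K)^2 + (norm a2)^2 * (norm L)^2 - 2 * r"
    proof -
      have "complex_of_real ((norm a1)^2) = complex_of_real ((norm K)^2 + (norm a2)^2 * (norm L)^2)
              - (a2 * K * cnj L + cnj (a2 * K * cnj L))"
        unfolding cnorm_sq of_real_add of_real_mult a1K by (simp add: algebra_simps)
      also have "\<dots> = complex_of_real (((norm K)^2 + (norm a2)^2 * (norm L)^2) - 2 * r)"
        unfolding complex_add_cnj r_def of_real_diff ..
      finally show ?thesis by (simp only: of_real_eq_iff)
    qed
    have key0: "\<And>x y A e a r::real. a = x^2 + A * y^2 - 2 * r \<Longrightarrow> x * y * e = r \<Longrightarrow>
        ((x + y) * (1 - A) - y * (1 + A + 2 * e)) * x = a - A * (x + y)^2"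
      by algebra
    have key: "(T * den - norm L * (norm (1 + a2 * z))^2) * norm K = (norm a1)^2 - (norm a2)^2 * T^2"
      unfolding F1 T_def den_def by (rule key0[OF F3 F2])
    have "norm a1 > norm a2 * T"
    proof (cases "a2 = 0")
      case True then show ?thesis using a1 by simp
    next
      case False
      then have "norm a2 * T < norm a2" using T TT by simp
      then show ?thesis using le by linarith
    qed
    then have "(norm a1)^2 > (norm a2 * T)^2"
      by (intro power_strict_mono) (use Tpos in auto)
    then have "(T * den - norm L * (norm (1 + a2 * z))^2) * norm K > 0"
      unfolding key by (simp add: power_mult_distrib)
    then have "T * den - norm L * (norm (1 + a2 * z))^2 > 0" using Kpos
      by (simp add: zero_less_mult_iff)
    then show ?thesis unfolding \<sigma>_def using Tpos den0 by (simp add: divide_less_eq)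
  qed
  have E1: "lam0 * (1 - w * a2) = a1 - w * a3"
  proof -
    have l: "lam0 * d = (a1 - cnj a2 * a3) + (a1 * a2 - a3) * z"
      unfolding lam0_def K_def L_def using dcnz by (simp add: field_simps)
    have "lam0 * (1 - w * a2) * (1 + a2 * z) = lam0 * d"
      unfolding w_def d_def using a2z by (simp add: field_simps; simp add: algebra_simps)
    also have "\<dots> = (a1 - w * a3) * (1 + a2 * z)"
      unfolding l w_def using a2z by (simp add: field_simps; simp add: algebra_simps)
    finally show ?thesis using a2z by simp
  qed
  have E2: "\<sigma> * lam0 * (1 - w * a2) = lam0 - a1"
  proof -
    have r1: "lam0 - a1 = L * (cnj a2 + z)" unfolding lam0_def a1K by (simp add: algebra_simps)
    have r2: "1 - w * a2 = d / (1 + a2 * z)"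
      unfolding w_def d_def using a2z by (simp add: field_simps; simp add: algebra_simps)
    have r3: "complex_of_real \<sigma> * lam0 = complex_of_real (norm L / norm K) * K * (1 + a2 * z) * cnj (1 + a2 * z) / d"
    proof -
      have "complex_of_real \<sigma> = complex_of_real (norm L) * ((1 + a2 * z) * cnj (1 + a2 * z)) / (complex_of_real T * d)"
        unfolding \<sigma>_def dc[symmetric] cnorm_sq[symmetric] by simp
      then show ?thesis unfolding lam0' using Kpos Tpos dcnz by (simp add: field_simps)
    qed
    have "complex_of_real \<sigma> * lam0 * (1 - w * a2) = L * z * cnj (1 + a2 * z)"
      unfolding r2 r3 zL[symmetric] using a2z dcnz by (rule cancel_lem)
    also have "\<dots> = L * (cnj a2 + z)" using zc by (simp add: algebra_simps)
    finally show ?thesis unfolding r1 .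
  qed
  define k where "k = a2 / a1"
  have lam0nz: "lam0 \<noteq> 0" using nlam0 Tpos by auto
  have Dl: "1 - w * complex_of_real \<sigma> * k * lam0 = (1 - complex_of_real \<sigma>) * lam0 / a1"
  proof -
    have "a1 - \<sigma> * w * a2 * lam0 = (1 - complex_of_real \<sigma>) * lam0" using E2 by (simp add: algebra_simps)
    then show ?thesis unfolding k_def using a1 by (simp add: field_simps)
  qed
  have s1c: "1 - complex_of_real \<sigma> \<noteq> 0" using s1 by (metis of_real_1 of_real_eq_iff right_minus_eq less_irrefl)
  have G1: "(1 - complex_of_real \<sigma>) * lam0 / (1 - w * complex_of_real \<sigma> * k * lam0) = a1"
    unfolding Dl using lam0nz s1c a1 by simp
  have G2: "k * (1 - complex_of_real \<sigma>) * lam0 / (1 - w * complex_of_real \<sigma> * k * lam0) = a2"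
  proof -
    have "k * (1 - complex_of_real \<sigma>) * lam0 / (1 - w * complex_of_real \<sigma> * k * lam0) = k * ((1 - complex_of_real \<sigma>) * lam0 / (1 - w * complex_of_real \<sigma> * k * lam0))"
      by simp
    also have "\<dots> = k * a1" using G1 by simp
    also have "\<dots> = a2" unfolding k_def using a1 by simp
    finally show ?thesis .
  qed
  have G3: "lam0 * (k * lam0 - cnj w * complex_of_real \<sigma>) / (1 - w * complex_of_real \<sigma> * k * lam0) = a3"
  proof -
    have "a2 * lam0 - a1 * cnj w * \<sigma> = a3 * (1 - complex_of_real \<sigma>)"
      using E1 E2 wc by algebra
    note eq = this
    have a1k: "a1 * k = a2" unfolding k_def using a1 by simp
    have "lam0 * (k * lam0 - cnj w * complex_of_real \<sigma>) / (1 - w * complex_of_real \<sigma> * k * lam0)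
        = lam0 * (k * lam0 - cnj w * complex_of_real \<sigma>) / ((1 - complex_of_real \<sigma>) * lam0 / a1)" by (simp only: Dl)
    also have "\<dots> = ((a1 * k) * lam0 - a1 * cnj w * complex_of_real \<sigma>) / (1 - complex_of_real \<sigma>)"
      using lam0nz s1c a1 by (simp add: field_simps)
    also have "\<dots> = a3" unfolding a1k eq using s1c by simp
    finally show ?thesis .
  qed
  show ?thesis using nw s0 s1 nlam0 TT G1 G2 G3 unfolding k_def by blast
qed

lemma tetra_disc:
  fixes a1 a2 a3 :: complex
  assumes le: "norm a2 \<le> norm a1" and a2: "norm a2 < 1" and a3: "norm a3 < 1"
    and T: "T1 a1 a2 a3 < 1"
  shows "\<exists>G1 G2 G3 lam0. G1 holomorphic_on ball 0 1 \<and> G2 holomorphic_on ball 0 1 \<and>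
     G3 holomorphic_on ball 0 1 \<and> (\<forall>lam\<in>ball 0 1. tetra (G1 lam) (G2 lam) (G3 lam)) \<and>
     G1 0 = 0 \<and> G2 0 = 0 \<and> G3 0 = 0 \<and> G1 lam0 = a1 \<and> G2 lam0 = a2 \<and> G3 lam0 = a3 \<and>
     norm lam0 = T1 a1 a2 a3"
proof (cases "a1 = 0")
  case True
  then have "a2 = 0" using le by simp
  moreover have "tetra 0 0 lam" if "lam \<in> ball (0::complex) 1" for lam
  proof -
    have "(1 - norm lam)^2 > 0" using that by simp
    then show ?thesis using that unfolding tetra_def by (simp add: power2_eq_square algebra_simps)
  qed
  ultimately show ?thesis using True
    by (intro exI[of _ "\<lambda>_. 0"] exI[of _ "\<lambda>_. 0"] exI[of _ "\<lambda>x. x"] exI[of _ a3])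
       (auto simp: T1_def)
next
  case False
  obtain w \<sigma> lam0 where w: "norm w = 1" and s0: "0 \<le> \<sigma>" and s1: "\<sigma> < 1"
    and nl: "norm lam0 = T1 a1 a2 a3"
    and e1: "(1 - complex_of_real \<sigma>) * lam0 / (1 - w * complex_of_real \<sigma> * (a2 / a1) * lam0) = a1"
    and e2: "(a2 / a1) * (1 - complex_of_real \<sigma>) * lam0 / (1 - w * complex_of_real \<sigma> * (a2 / a1) * lam0) = a2"
    and e3: "lam0 * ((a2 / a1) * lam0 - cnj w * complex_of_real \<sigma>) / (1 - w * complex_of_real \<sigma> * (a2 / a1) * lam0) = a3"
    using disc_interp[OF False le a2 a3 T] by blast
  define k where "k = a2 / a1"
  have k: "norm k \<le> 1" unfolding k_def using False le by (simp add: norm_divide divide_le_eq_1)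
  have dnz: "\<And>lam. lam \<in> ball 0 1 \<Longrightarrow> 1 - w * complex_of_real \<sigma> * k * lam \<noteq> 0"
    using disc_tetra(1)[OF w k s0 s1] by simp
  define G1 where "G1 = (\<lambda>lam. (1 - complex_of_real \<sigma>) * lam / (1 - w * complex_of_real \<sigma> * k * lam))"
  define G2 where "G2 = (\<lambda>lam. k * (1 - complex_of_real \<sigma>) * lam / (1 - w * complex_of_real \<sigma> * k * lam))"
  define G3 where "G3 = (\<lambda>lam. lam * (k * lam - cnj w * complex_of_real \<sigma>) / (1 - w * complex_of_real \<sigma> * k * lam))"
  have H1: "G1 holomorphic_on ball 0 1" unfolding G1_def
      using dnz by (intro holomorphic_intros) auto
  have H2: "G2 holomorphic_on ball 0 1" unfolding G2_def
      using dnz by (intro holomorphic_intros) auto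
  have H3: "G3 holomorphic_on ball 0 1" unfolding G3_def
      using dnz by (intro holomorphic_intros) auto
  have Ht: "\<forall>lam\<in>ball 0 1. tetra (G1 lam) (G2 lam) (G3 lam)"
    unfolding G1_def G2_def G3_def using disc_tetra(2)[OF w k s0 s1] by simp
  have Z: "G1 0 = 0" "G2 0 = 0" "G3 0 = 0" unfolding G1_def G2_def G3_def by simp_all
  have V: "G1 lam0 = a1" "G2 lam0 = a2" "G3 lam0 = a3"
    unfolding G1_def G2_def G3_def k_def using e1 e2 e3 by simp_all
  show ?thesis using H1 H2 H3 Ht Z V nl by blast
qed

lemma tetra_disc_any:
  fixes a1 a2 a3 :: complex
  assumes a1: "norm a1 < 1" and a2: "norm a2 < 1" and a3: "norm a3 < 1"
    and T: "T1 a1 a2 a3 < 1" and T': "T1 a2 a1 a3 < 1"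
  shows "\<exists>G1 G2 G3 lam0. G1 holomorphic_on ball 0 1 \<and> G2 holomorphic_on ball 0 1 \<and>
     G3 holomorphic_on ball 0 1 \<and> (\<forall>lam\<in>ball 0 1. tetra (G1 lam) (G2 lam) (G3 lam)) \<and>
     G1 0 = 0 \<and> G2 0 = 0 \<and> G3 0 = 0 \<and> G1 lam0 = a1 \<and> G2 lam0 = a2 \<and> G3 lam0 = a3 \<and>
     (norm lam0 = T1 a1 a2 a3 \<or> norm lam0 = T1 a2 a1 a3)"
proof (cases "norm a2 \<le> norm a1")
  case True
  then show ?thesis using tetra_disc[OF True a2 a3 T] by blast
next
  case False
  then have "norm a1 \<le> norm a2" by simp
  from tetra_disc[OF this a1 a3 T'] obtain G1 G2 G3 lam0 where
    "G1 holomorphic_on ball 0 1" "G2 holomorphic_on ball 0 1"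
     "G3 holomorphic_on ball 0 1" "(\<forall>lam\<in>ball 0 1. tetra (G1 lam) (G2 lam) (G3 lam))"
     "G1 0 = 0" "G2 0 = 0" "G3 0 = 0" "G1 lam0 = a2" "G2 lam0 = a1" "G3 lam0 = a3"
     "norm lam0 = T1 a2 a1 a3" by blast
  then show ?thesis
    by (intro exI[of _ G2] exI[of _ G1] exI[of _ G3] exI[of _ lam0]) (auto simp: tetra_sym)
qed

subsection \<open>Schwarz-Pick\<close>

lemma artanh_mono:
  fixes x y :: real
  assumes "0 \<le> x" "x \<le> y" "y < 1"
  shows "artanh x \<le> artanh y"
proof -
  have "(1 + x) / (1 - x) \<le> (1 + y) / (1 - y)"
    using assms by (simp add: divide_simps) (simp add: algebra_simps mult_mono)
  moreover have "0 < (1 + x) / (1 - x)" using assms by simp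
  ultimately show ?thesis unfolding artanh_def by simp
qed

lemma hrho_moeb: "hrho x y = artanh (norm (Moebius_function 0 x y))"
proof -
  have "norm (1 - cnj y * x) = norm (1 - cnj x * y)"
    by (metis complex_cnj_cnj complex_cnj_diff complex_cnj_mult complex_cnj_one complex_mod_cnj mult.commute)
  then have "norm ((x - y) / (1 - cnj y * x)) = norm ((y - x) / (1 - cnj x * y))"
    by (simp add: norm_divide norm_minus_commute)
  then show ?thesis unfolding hrho_def Moebius_function_simple by simp
qed

lemma hrho_0: "hrho 0 z = artanh (norm z)"
  unfolding hrho_def by simp

lemma schwarz_pick:
  assumes holh: "h holomorphic_on ball 0 1" and hb: "h ` ball 0 1 \<subseteq> ball 0 1"
    and a: "a \<in> ball 0 1" and b: "b \<in> ball 0 1"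
  shows "hrho (h a) (h b) \<le> hrho a b"
proof -
  define F where "F = Moebius_function 0 (h a) \<circ> h \<circ> Moebius_function 0 (- a)"
  have na: "norm a < 1" and nb: "norm b < 1" using a b by auto
  have "h a \<in> ball 0 1" using hb a by blast
  then have nha: "norm (h a) < 1" by simp
  have mball: "Moebius_function 0 (- a) ` ball 0 1 \<subseteq> ball 0 1"
    using Moebius_function_norm_lt_1[of "-a"] na by auto
  have h1: "(Moebius_function 0 (h a) \<circ> h) holomorphic_on ball 0 1"
    by (rule holomorphic_on_compose_gen[OF holh Moebius_function_holomorphic[OF nha] hb])
  have holF: "F holomorphic_on ball 0 1"
    unfolding F_def comp_assoc[symmetric]
    by (rule holomorphic_on_compose_gen[OF Moebius_function_holomorphic h1 mball]) (use na in simp)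
  have F0: "F 0 = 0" unfolding F_def by (simp add: Moebius_function_simple)
  have Flt: "norm (F z) < 1" if "norm z < 1" for z
  proof -
    have "z \<in> ball 0 1" using that by simp
    then have "Moebius_function 0 (- a) z \<in> ball 0 1" using mball by blast
    then have "h (Moebius_function 0 (- a) z) \<in> ball 0 1" using hb by blast
    then show ?thesis unfolding F_def using Moebius_function_norm_lt_1[OF nha] by auto
  qed
  define \<xi> where "\<xi> = Moebius_function 0 a b"
  have nxi: "norm \<xi> < 1" unfolding \<xi>_def using Moebius_function_norm_lt_1[OF na nb] .
  have inv: "Moebius_function 0 (- a) \<xi> = b"
    unfolding \<xi>_def by (rule Moebius_function_compose) (use na nb in auto)
  have "norm (F \<xi>) \<le> norm \<xi>" using Schwarz_Lemma(1)[OF holF F0 Flt nxi] .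
  then have le: "norm (Moebius_function 0 (h a) (h b)) \<le> norm (Moebius_function 0 a b)"
    unfolding F_def \<xi>_def[symmetric] using inv by simp
  show ?thesis unfolding hrho_moeb
    by (rule artanh_mono[OF norm_ge_zero le]) (use Moebius_function_norm_lt_1[OF na nb] in auto)
qed

definition holo_at :: "(complex^'n \<Rightarrow> complex) \<Rightarrow> complex^'n \<Rightarrow> bool" where
  "holo_at f z \<longleftrightarrow> (\<exists>D. (f has_derivative D) (at z) \<and> (\<forall>c v. D (cscale c v) = c * D v))"

lemma holo_on_iff: "holo_on f S \<longleftrightarrow> (\<forall>z\<in>S. holo_at f z)"
  unfolding holo_on_def holo_at_def ..

lemma holo_at_nth: "holo_at (\<lambda>z. z $ i) z"
  unfolding holo_at_def
  by (rule exI[of _ "\<lambda>h. h $ i"]) (simp add: bounded_linear_imp_has_derivative[OF bounded_linear_vec_nth] cscale_def)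

lemma holo_at_const: "holo_at (\<lambda>z. c) z"
  unfolding holo_at_def by (rule exI[of _ "\<lambda>h. 0"]) simp

lemma holo_at_add: "holo_at f z \<Longrightarrow> holo_at g z \<Longrightarrow> holo_at (\<lambda>x. f x + g x) z"
  unfolding holo_at_def
  apply (elim exE conjE)
  subgoal for Df Dg by (rule exI[of _ "\<lambda>h. Df h + Dg h"]) (auto intro: has_derivative_add simp: algebra_simps)
  done

lemma holo_at_diff: "holo_at f z \<Longrightarrow> holo_at g z \<Longrightarrow> holo_at (\<lambda>x. f x - g x) z"
  unfolding holo_at_def
  apply (elim exE conjE)
  subgoal for Df Dg by (rule exI[of _ "\<lambda>h. Df h - Dg h"]) (auto intro: has_derivative_diff simp: algebra_simps)
  done

lemma holo_at_mult: "holo_at f z \<Longrightarrow> holo_at g z \<Longrightarrow> holo_at (\<lambda>x. f x * g x) z"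
  unfolding holo_at_def
  apply (elim exE conjE)
  subgoal for Df Dg
    apply (rule exI[of _ "\<lambda>h. f z * Dg h + Df h * g z"])
    apply (rule conjI)
     apply (rule has_derivative_mult; assumption)
    apply (simp add: algebra_simps)
    done
  done

lemma holo_at_divide: "holo_at f z \<Longrightarrow> holo_at g z \<Longrightarrow> g z \<noteq> 0 \<Longrightarrow> holo_at (\<lambda>x. f x / g x) z"
  unfolding holo_at_def
  apply (elim exE conjE)
  subgoal for Df Dg
    apply (rule exI[of _ "\<lambda>h. (Df h * g z - f z * Dg h) / (g z * g z)"])
    apply (rule conjI)
     apply (rule has_derivative_divide'; assumption)
    apply (simp add: algebra_simps add_divide_distrib diff_divide_distrib)
    done
  done

lemma vec_has_derivative:
  fixes g :: "complex \<Rightarrow> complex^'n"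
  assumes d: "\<And>i. ((\<lambda>t. g t $ i) has_field_derivative d i) (at t)"
  shows "(g has_derivative (\<lambda>s. cscale s (\<chi> i. d i))) (at t)"
proof -
  have lin: "linear (\<lambda>s::complex. cscale s (\<chi> i. d i))"
    by (rule linearI) (simp_all add: cscale_def vec_eq_iff algebra_simps)
  then have bl: "bounded_linear (\<lambda>s::complex. cscale s (\<chi> i. d i))"
    using linear_conv_bounded_linear by blast
  have comp: "((\<lambda>y. ((g y $ i - g t $ i) - (y - t) * d i) /\<^sub>R norm (y - t)) \<longlongrightarrow> 0) (at t)" for i
  proof -
    have e: "(\<lambda>s. s * d i) = (*) (d i)" by (auto simp: fun_eq_iff mult.commute)
    have "((\<lambda>t. g t $ i) has_derivative (\<lambda>s. s * d i)) (at t)"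
      using d[of i] unfolding has_field_derivative_def e by simp
    then show ?thesis unfolding has_derivative_at_within by simp
  qed
  have "((\<lambda>y. ((g y - g t) - cscale (y - t) (\<chi> i. d i)) /\<^sub>R norm (y - t)) \<longlongrightarrow> 0) (at t)"
    by (rule vec_tendstoI) (use comp in \<open>simp add: cscale_def\<close>)
  then show ?thesis unfolding has_derivative_at_within using bl by simp
qed

lemma holo_compose:
  fixes f :: "complex^'n \<Rightarrow> complex" and g :: "complex \<Rightarrow> complex^'n"
  assumes hf: "holo_on f \<Omega>" and hg: "holo_curve_on g (ball 0 1)" and gs: "g ` ball 0 1 \<subseteq> \<Omega>"
  shows "(\<lambda>t. f (g t)) holomorphic_on ball 0 1"
  unfolding holomorphic_on_def
proof
  fix t :: complex assume t: "t \<in> ball 0 1"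
  have "\<forall>i. \<exists>di. ((\<lambda>t. g t $ i) has_field_derivative di) (at t)"
  proof
    fix i
    have "(\<lambda>t. g t $ i) holomorphic_on ball 0 1" using hg unfolding holo_curve_on_def by blast
    then have "(\<lambda>t. g t $ i) field_differentiable at t"
      using holomorphic_on_imp_differentiable_at[OF _ open_ball t] by blast
    then show "\<exists>di. ((\<lambda>t. g t $ i) has_field_derivative di) (at t)"
      unfolding field_differentiable_def by blast
  qed
  then obtain d where d: "\<And>i. ((\<lambda>t. g t $ i) has_field_derivative d i) (at t)" by metis
  have gd: "(g has_derivative (\<lambda>s. cscale s (\<chi> i. d i))) (at t)" by (rule vec_has_derivative[OF d])
  obtain D where D: "(f has_derivative D) (at (g t))" and cl: "\<forall>c v. D (cscale c v) = c * D v"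
    using hf gs t unfolding holo_on_def by blast
  have "((\<lambda>t. f (g t)) has_derivative (\<lambda>s. D (cscale s (\<chi> i. d i)))) (at t)"
    using has_derivative_compose[OF gd D] by (simp add: o_def)
  moreover have "(\<lambda>s. D (cscale s (\<chi> i. d i))) = (*) (D (\<chi> i. d i))"
    using cl by (auto simp: fun_eq_iff mult.commute)
  ultimately have "((\<lambda>t. f (g t)) has_field_derivative (D (\<chi> i. d i))) (at t)"
    unfolding has_field_derivative_def by simp
  then show "(\<lambda>t. f (g t)) field_differentiable at t within ball 0 1"
    unfolding field_differentiable_def using has_field_derivative_at_within by blast
qed

lemma idx_inv:
  assumes "bij_betw idx (UNIV :: 'n set) {1..n}" "j \<in> {1..n}"
  shows "idx (inv idx j) = j"
  using assms bij_betw_inv_into_right by fastforce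

lemma inv_idx:
  assumes "bij_betw idx (UNIV :: 'n set) {1..n}"
  shows "inv idx (idx i) = i"
  using assms by (simp add: bij_betw_def inv_into_f_f)

lemma idx_range:
  assumes "bij_betw idx (UNIV :: 'n set) {1..n}"
  shows "idx i \<in> {1..n}"
  using assms bij_betwE by blast

lemma coord_lambda:
  assumes "bij_betw idx (UNIV :: 'n set) {1..n}" "j \<in> {1..n}"
  shows "coord idx ((\<chi> i. F (idx i)) :: complex^'n) j = F j"
  unfolding coord_def using idx_inv[OF assms] by simp

lemma coord_zero: "coord idx 0 j = 0"
  unfolding coord_def by simp

lemma Gtilde_E:
  assumes "z \<in> Gtilde n idx"
  obtains \<beta> where "norm (coord idx z n) < 1"
    "\<And>j. j \<in> {1..n-1} \<Longrightarrow> coord idx z j = \<beta> j + cnj (\<beta> (n - j)) * coord idx z n"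
    "\<And>j. j \<in> {1..n-1} \<Longrightarrow> norm (\<beta> j) + norm (\<beta> (n - j)) < real (n choose j)"
  using assms unfolding Gtilde_def by blast

lemma Gtilde_I:
  assumes "norm (coord idx z n) < 1"
    "\<And>j. j \<in> {1..n-1} \<Longrightarrow> coord idx z j = \<beta> j + cnj (\<beta> (n - j)) * coord idx z n"
    "\<And>j. j \<in> {1..n-1} \<Longrightarrow> norm (\<beta> j) + norm (\<beta> (n - j)) < real (n choose j)"
  shows "z \<in> Gtilde n idx"
  using assms unfolding Gtilde_def by blast

definition TT :: "nat \<Rightarrow> ('n \<Rightarrow> nat) \<Rightarrow> complex^'n \<Rightarrow> nat \<Rightarrow> real" where
  "TT n idx y j = ((real (n choose j) * norm (coord idx y j - cnj (coord idx y (n - j)) * coord idx y n)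
          + norm (coord idx y j * coord idx y (n - j) - (cbin n j)^2 * coord idx y n))
         / ((real (n choose j))^2 - (norm (coord idx y (n - j)))^2))"

subsection \<open>Part 1: Caratheodory lower bound\<close>

lemma coord_pair:
  assumes z: "z \<in> Gtilde n idx" and j: "j \<in> {1..n-1}"
  obtains b1 b2 where "coord idx z j = b1 + cnj b2 * coord idx z n"
    "coord idx z (n - j) = b2 + cnj b1 * coord idx z n"
    "norm b1 + norm b2 < real (n choose j)" "norm (coord idx z n) < 1"
proof -
  obtain \<beta> where q: "norm (coord idx z n) < 1"
    and e: "\<And>j. j \<in> {1..n-1} \<Longrightarrow> coord idx z j = \<beta> j + cnj (\<beta> (n - j)) * coord idx z n"
    and b: "\<And>j. j \<in> {1..n-1} \<Longrightarrow> norm (\<beta> j) + norm (\<beta> (n - j)) < real (n choose j)"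
    using Gtilde_E[OF z] by blast
  have j': "n - j \<in> {1..n-1}" and jj: "n - (n - j) = j" using j by auto
  show ?thesis
    using that[of "\<beta> j" "\<beta> (n - j)"] e[OF j] e[OF j'] b[OF j] q unfolding jj by simp
qed

lemma part1:
  assumes y: "y \<in> Gtilde n idx" and j: "j \<in> {1..n-1}"
  shows "\<exists>f. holo_on f (Gtilde n idx) \<and> f ` Gtilde n idx \<subseteq> ball 0 1 \<and> f 0 = 0 \<and>
             norm (f y) = TT n idx y j"
proof -
  define c where "c = real (n choose j)"
  have "j \<le> n" using j by auto
  then have c0: "c > 0" unfolding c_def by simp
  obtain b1 b2 where "coord idx y j = b1 + cnj b2 * coord idx y n"
    and yv: "coord idx y (n - j) = b2 + cnj b1 * coord idx y n"
    and bc: "norm b1 + norm b2 < c" and yq: "norm (coord idx y n) < 1"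
    using coord_pair[OF y j] unfolding c_def by blast
  have vc: "norm (coord idx y (n - j)) < c"
  proof -
    have "norm (coord idx y (n - j)) \<le> norm b2 + norm b1 * norm (coord idx y n)"
      unfolding yv by (metis complex_mod_cnj norm_mult norm_triangle_ineq)
    also have "\<dots> \<le> norm b2 + norm b1" using yq by (simp add: mult_left_le less_imp_le)
    finally show ?thesis using bc by simp
  qed
  obtain w where w: "norm w = 1" and fw: "norm ((c * coord idx y n * w - coord idx y j) / (coord idx y (n - j) * w - c))
      = (c * norm (coord idx y j - cnj (coord idx y (n - j)) * coord idx y n)
         + norm (coord idx y j * coord idx y (n - j) - (complex_of_real c)^2 * coord idx y n)) / (c^2 - (norm (coord idx y (n - j)))^2)"
    using psi_attain[OF vc] by blast
  define f where "f = (\<lambda>z. (c * coord idx z n * w - coord idx z j) / (coord idx z (n - j) * w - c))"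
  have bound: "coord idx z (n - j) * w - c \<noteq> 0 \<and> norm (f z) < 1" if z: "z \<in> Gtilde n idx" for z
  proof -
    obtain b1 b2 where u: "coord idx z j = b1 + cnj b2 * coord idx z n"
      and v: "coord idx z (n - j) = b2 + cnj b1 * coord idx z n"
      and bc: "norm b1 + norm b2 < c" and q: "norm (coord idx z n) < 1"
      using coord_pair[OF z j] unfolding c_def by blast
    show ?thesis using psi_bound[OF u v bc q w] unfolding f_def by simp
  qed
  have holo: "holo_on f (Gtilde n idx)"
    unfolding holo_on_iff
  proof
    fix z assume z: "z \<in> Gtilde n idx"
    show "holo_at f z" unfolding f_def coord_def
      by (intro holo_at_divide holo_at_diff holo_at_mult holo_at_const holo_at_nth)
         (use bound[OF z] in \<open>simp add: coord_def\<close>)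
  qed
  have f0: "f 0 = 0" unfolding f_def coord_zero by simp
  have "norm (f y) = (c * norm (coord idx y j - cnj (coord idx y (n - j)) * coord idx y n)
         + norm (coord idx y j * coord idx y (n - j) - (complex_of_real c)^2 * coord idx y n)) / (c^2 - (norm (coord idx y (n - j)))^2)"
    unfolding f_def by (rule fw)
  also have "\<dots> = TT n idx y j" unfolding TT_def c_def cbin_def by simp
  finally have "norm (f y) = TT n idx y j" .
  then show ?thesis using holo bound f0 by (intro exI[of _ f]) auto
qed

lemma TT_lt1:
  assumes y: "y \<in> Gtilde n idx" and j: "j \<in> {1..n-1}"
  shows "TT n idx y j < 1"
proof -
  obtain f where "holo_on f (Gtilde n idx)" "f ` Gtilde n idx \<subseteq> ball 0 1" "norm (f y) = TT n idx y j"
    using part1[OF y j] by blast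
  moreover have "f y \<in> ball 0 1" using y calculation(2) by blast
  ultimately show ?thesis by simp
qed

lemma cara_ge:
  assumes y: "y \<in> Gtilde n idx" and j: "j \<in> {1..n-1}"
  shows "ereal (artanh (TT n idx y j)) \<le> caratheodory (Gtilde n idx) 0 y"
proof -
  obtain f where f: "holo_on f (Gtilde n idx)" "f ` Gtilde n idx \<subseteq> ball 0 1" "f 0 = 0"
    "norm (f y) = TT n idx y j"
    using part1[OF y j] by blast
  have "ereal (hrho (f 0) (f y)) \<le> caratheodory (Gtilde n idx) 0 y"
    unfolding caratheodory_def by (rule SUP_upper) (use f in auto)
  moreover have "hrho (f 0) (f y) = artanh (TT n idx y j)"
    using f(3,4) by (simp add: hrho_0)
  ultimately show ?thesis by simp
qed

subsection \<open>Part 2: Caratheodory below Lempert\<close>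

lemma cara_le_lempert: "caratheodory \<Omega> z w \<le> lempert \<Omega> z w"
  unfolding caratheodory_def lempert_def
proof (rule SUP_least, rule INF_greatest)
  fix f ab
  assume f: "f \<in> {f. holo_on f \<Omega> \<and> f ` \<Omega> \<subseteq> ball 0 1}"
    and ab: "ab \<in> {(a, b). a \<in> ball 0 1 \<and> b \<in> ball 0 1 \<and>
                 (\<exists>g. holo_curve_on g (ball 0 1) \<and> g ` ball 0 1 \<subseteq> \<Omega> \<and> g a = z \<and> g b = w)}"
  obtain a b where abd: "ab = (a, b)" by (cases ab)
  have "a \<in> ball 0 1 \<and> b \<in> ball 0 1 \<and>
                 (\<exists>g. holo_curve_on g (ball 0 1) \<and> g ` ball 0 1 \<subseteq> \<Omega> \<and> g a = z \<and> g b = w)"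
    using ab unfolding abd by simp
  then obtain g where a: "a \<in> ball 0 1" and b: "b \<in> ball 0 1"
    and g: "holo_curve_on g (ball 0 1)" "g ` ball 0 1 \<subseteq> \<Omega>" "g a = z" "g b = w"
    by blast
  have fh: "holo_on f \<Omega>" and fb: "f ` \<Omega> \<subseteq> ball 0 1" using f by auto
  have hol: "(\<lambda>t. f (g t)) holomorphic_on ball 0 1"
    by (rule holo_compose[OF fh g(1) g(2)])
  have im: "(\<lambda>t. f (g t)) ` ball 0 1 \<subseteq> ball 0 1" using fb g(2) by blast
  have "hrho (f (g a)) (f (g b)) \<le> hrho a b"
    using schwarz_pick[OF hol im a b] by simp
  then show "ereal (hrho (f z) (f w)) \<le> ereal (hrho (fst ab) (snd ab))"
    using g abd by simp
qed

lemma J_struct: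
  assumes n3: "n \<ge> 3" and y: "y \<in> Jset n idx" and j: "j \<in> {1..n-1}"
  shows "coord idx y j = of_nat (n choose j) *
     (if 2 * j < n then coord idx y 1 / of_nat n
      else if 2 * j > n then coord idx y (n - 1) / of_nat n
      else (coord idx y 1 / of_nat n + coord idx y (n - 1) / of_nat n) / 2)"
proof -
  have H: "coord idx y k = cbin n k / of_nat n * coord idx y 1 \<and>
           coord idx y (n - k) = cbin n k / of_nat n * coord idx y (n - 1)"
    if "2 \<le> k" "2 * k < n" for k
  proof (cases "odd n")
    case True
    then have "k \<in> {2..n div 2}" using that by auto
    then show ?thesis using y True unfolding Jset_def by auto
  next
    case False
    then have "k \<in> {2..n div 2 - 1}" using that by auto
    then show ?thesis using y False unfolding Jset_def by auto
  qed
  have n0: "of_nat n \<noteq> (0::complex)" using n3 by simp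
  show ?thesis
  proof (cases "2 * j < n")
    case True
    show ?thesis
    proof (cases "j = 1")
      case True then show ?thesis using n3 n0 by simp
    next
      case False
      then have "2 \<le> j" using j by auto
      then show ?thesis using H[OF _ \<open>2 * j < n\<close>] \<open>2 * j < n\<close> unfolding cbin_def by simp
    qed
  next
    case notlt: False
    show ?thesis
    proof (cases "2 * j > n")
      case True
      define k where "k = n - j"
      have k: "2 * k < n" "1 \<le> k" "n - k = j" unfolding k_def using True j by auto
      have ck: "n choose k = n choose j"
        using k(3) binomial_symmetric[of k n] j unfolding k_def by auto
      show ?thesis
      proof (cases "k = 1")
        case True
        then have "j = n - 1" using k by simp
        then have "n choose j = n" using ck True by simp
        then show ?thesis using True \<open>j = n - 1\<close> \<open>2 * j > n\<close> n0 by simp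
      next
        case False
        then have "2 \<le> k" using k by auto
        then have "coord idx y j = cbin n k / of_nat n * coord idx y (n - 1)"
          using H[OF _ k(1)] k(3) by simp
        then show ?thesis using \<open>2 * j > n\<close> ck unfolding cbin_def by simp
      qed
    next
      case False
      then have e: "2 * j = n" using notlt by simp
      then have ev: "\<not> odd n" and jd: "j = n div 2" by auto
      then have "coord idx y j = cbin n j / of_nat n * ((coord idx y 1 + coord idx y (n - 1)) / 2)"
        using y unfolding Jset_def by auto
      then show ?thesis using e n0 unfolding cbin_def by (simp add: field_simps)
    qed
  qed
qed

lemma scale_T1:
  fixes a b q :: complex and c :: real
  assumes c: "c > 0"
  shows "(c * norm (c * a - cnj (c * b) * q) + norm (c * a * (c * b) - (complex_of_real c)^2 * q))
        / (c^2 - (norm (c * b))^2) = T1 a b q"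
proof -
  have e1: "norm (c * a - cnj (c * b) * q) = c * norm (a - cnj b * q)"
  proof -
    have "c * a - cnj (c * b) * q = c * (a - cnj b * q)" by (simp add: algebra_simps)
    then show ?thesis using c by (simp add: norm_mult)
  qed
  have e2: "norm (c * a * (c * b) - (complex_of_real c)^2 * q) = c^2 * norm (a * b - q)"
  proof -
    have "c * a * (c * b) - (complex_of_real c)^2 * q = (complex_of_real c)^2 * (a * b - q)"
      by (simp add: algebra_simps power2_eq_square)
    then show ?thesis using c by (simp add: norm_mult norm_power)
  qed
  have e3: "(norm (c * b))^2 = c^2 * (norm b)^2" using c by (simp add: norm_mult power_mult_distrib)
  have gen: "(c * (c * X) + c^2 * Y) / (c^2 - c^2 * Z) = (X + Y) / (1 - Z)" for X Y Z :: real
  proof -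
    have "(c * (c * X) + c^2 * Y) / (c^2 - c^2 * Z) = (c^2 * (X + Y)) / (c^2 * (1 - Z))"
      by (simp add: algebra_simps power2_eq_square)
    also have "\<dots> = (X + Y) / (1 - Z)" using c by simp
    finally show ?thesis .
  qed
  show ?thesis unfolding e1 e2 e3 T1_def by (rule gen)
qed

lemma lempert_le:
  fixes y :: "complex^'n"
  assumes n3: "n \<ge> 3" and bij: "bij_betw idx (UNIV :: 'n set) {1..n}" and yJ: "y \<in> Jset n idx"
  shows "\<exists>j\<in>{1..n-1}. lempert (Gtilde n idx) 0 y \<le> ereal (artanh (TT n idx y j))"
proof -
  have yG: "y \<in> Gtilde n idx" using yJ unfolding Jset_def by blast
  have j1: "1 \<in> {1..n-1}" and jn: "n - 1 \<in> {1..n-1}" using n3 by auto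
  have nn: "n - (n - 1) = 1" using n3 by simp
  have cn1: "n choose (n - 1) = n" using n3 binomial_symmetric[of 1 n] by simp
  have n0: "real n > 0" using n3 by simp
  define a1 where "a1 = coord idx y 1 / of_nat n"
  define a2 where "a2 = coord idx y (n - 1) / of_nat n"
  define a3 where "a3 = coord idx y n"
  have y1: "coord idx y 1 = complex_of_real (real n) * a1" unfolding a1_def using n0 by simp
  have y2: "coord idx y (n - 1) = complex_of_real (real n) * a2" unfolding a2_def using n0 by simp
  obtain b1 b2 where u: "coord idx y 1 = b1 + cnj b2 * coord idx y n"
    and v: "coord idx y (n - 1) = b2 + cnj b1 * coord idx y n"
    and bc: "norm b1 + norm b2 < real n" and q: "norm (coord idx y n) < 1"
    using coord_pair[OF yG j1] by (auto simp: nn)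
  have "norm (coord idx y 1) < real n"
  proof -
    have "norm (coord idx y 1) \<le> norm b1 + norm b2 * norm (coord idx y n)"
      unfolding u by (metis complex_mod_cnj norm_mult norm_triangle_ineq)
    also have "\<dots> \<le> norm b1 + norm b2" using q by (simp add: mult_left_le less_imp_le)
    finally show ?thesis using bc by simp
  qed
  then have na1: "norm a1 < 1" unfolding a1_def using n0 by (simp add: norm_divide)
  have "norm (coord idx y (n - 1)) < real n"
  proof -
    have "norm (coord idx y (n - 1)) \<le> norm b2 + norm b1 * norm (coord idx y n)"
      unfolding v by (metis complex_mod_cnj norm_mult norm_triangle_ineq)
    also have "\<dots> \<le> norm b2 + norm b1" using q by (simp add: mult_left_le less_imp_le)
    finally show ?thesis using bc by simp
  qed
  then have na2: "norm a2 < 1" unfolding a2_def using n0 by (simp add: norm_divide)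
  have na3: "norm a3 < 1" unfolding a3_def using q .
  have TT1: "TT n idx y 1 = T1 a1 a2 a3"
  proof -
    have "TT n idx y 1 = (real n * norm (complex_of_real (real n) * a1 - cnj (complex_of_real (real n) * a2) * a3)
       + norm (complex_of_real (real n) * a1 * (complex_of_real (real n) * a2) - (complex_of_real (real n))^2 * a3))
      / ((real n)^2 - (norm (complex_of_real (real n) * a2))^2)"
      unfolding TT_def nn y1[symmetric] y2[symmetric] a3_def cbin_def by simp
    also have "\<dots> = T1 a1 a2 a3" by (rule scale_T1[OF n0])
    finally show ?thesis .
  qed
  have TT2: "TT n idx y (n - 1) = T1 a2 a1 a3"
  proof -
    have "TT n idx y (n - 1) = (real n * norm (complex_of_real (real n) * a2 - cnj (complex_of_real (real n) * a1) * a3)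
       + norm (complex_of_real (real n) * a2 * (complex_of_real (real n) * a1) - (complex_of_real (real n))^2 * a3))
      / ((real n)^2 - (norm (complex_of_real (real n) * a1))^2)"
      unfolding TT_def nn cn1 y1[symmetric] y2[symmetric] a3_def cbin_def by simp
    also have "\<dots> = T1 a2 a1 a3" by (rule scale_T1[OF n0])
    finally show ?thesis .
  qed
  have T1lt: "T1 a1 a2 a3 < 1" using TT_lt1[OF yG j1] TT1 by simp
  have T2lt: "T1 a2 a1 a3 < 1" using TT_lt1[OF yG jn] TT2 by simp
  obtain G1 G2 G3 lam0 where H1: "G1 holomorphic_on ball 0 1" and H2: "G2 holomorphic_on ball 0 1"
    and H3: "G3 holomorphic_on ball 0 1" and Ht: "\<forall>lam\<in>ball 0 1. tetra (G1 lam) (G2 lam) (G3 lam)"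
    and Z: "G1 0 = 0" "G2 0 = 0" "G3 0 = 0" and V: "G1 lam0 = a1" "G2 lam0 = a2" "G3 lam0 = a3"
    and nl: "norm lam0 = T1 a1 a2 a3 \<or> norm lam0 = T1 a2 a1 a3"
    using tetra_disc_any[OF na1 na2 na3 T1lt T2lt] by blast
  define F where "F = (\<lambda>lam j. if j = n then G3 lam else of_nat (n choose j) *
     (if 2 * j < n then G1 lam else if 2 * j > n then G2 lam else (G1 lam + G2 lam) / 2))"
  define Y where "Y = (\<lambda>lam. (\<chi> i. F lam (idx i)) :: complex^'n)"
  have cY: "coord idx (Y lam) j = F lam j" if "j \<in> {1..n}" for lam j
    unfolding Y_def using coord_lambda[OF bij that] .
  have holY: "holo_curve_on Y (ball 0 1)"
    unfolding holo_curve_on_def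
  proof
    fix i
    have "(\<lambda>t. F t (idx i)) holomorphic_on ball 0 1"
      unfolding F_def using H1 H2 H3
      by (cases "idx i = n"; cases "2 * idx i < n"; cases "2 * idx i > n")
         (auto intro!: holomorphic_intros)
    then show "(\<lambda>t. Y t $ i) holomorphic_on ball 0 1" unfolding Y_def by simp
  qed
  have YG: "Y ` ball 0 1 \<subseteq> Gtilde n idx"
  proof
    fix x assume "x \<in> Y ` ball 0 1"
    then obtain lam where lam: "lam \<in> ball 0 1" and x: "x = Y lam" by blast
    have tt: "tetra (G1 lam) (G2 lam) (G3 lam)" using Ht lam by blast
    obtain B1 B2 where e1: "G1 lam = B1 + cnj B2 * G3 lam" and e2: "G2 lam = B2 + cnj B1 * G3 lam"
      and bb: "norm B1 + norm B2 < 1"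
      using tetra_beta[OF tt] by blast
    define \<beta> where "\<beta> = (\<lambda>j. of_nat (n choose j) *
       (if 2 * j < n then B1 else if 2 * j > n then B2 else (B1 + B2) / 2))"
    have cn: "coord idx (Y lam) n = G3 lam" using cY[of n lam] n3 unfolding F_def by simp
    show "x \<in> Gtilde n idx" unfolding x
    proof (rule Gtilde_I[where \<beta> = \<beta>])
      show "norm (coord idx (Y lam) n) < 1" unfolding cn using tt unfolding tetra_def by simp
    next
      fix j assume j: "j \<in> {1..n-1}"
      have jn': "j \<noteq> n" and jr: "j \<in> {1..n}" using j n3 by auto
      have cs: "n choose (n - j) = n choose j" using binomial_symmetric[of j n] j by auto
      have nj: "n - j \<noteq> n" using j by auto
      show "coord idx (Y lam) j = \<beta> j + cnj (\<beta> (n - j)) * coord idx (Y lam) n"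
        unfolding cY[OF jr] cn F_def \<beta>_def using jn' cs j
        by (cases "2 * j < n"; cases "2 * j > n")
           (auto simp: e1 e2 algebra_simps add_divide_distrib diff_divide_distrib)
      have "j \<le> n" using j by auto
      then have Cpos: "real (n choose j) > 0" by simp
      show "norm (\<beta> j) + norm (\<beta> (n - j)) < real (n choose j)"
      proof (cases "2 * j < n")
        case True
        then have "\<not> 2 * (n - j) < n" "2 * (n - j) > n" using j by auto
        then have "norm (\<beta> j) + norm (\<beta> (n - j)) = real (n choose j) * (norm B1 + norm B2)"
          unfolding \<beta>_def using True cs by (simp add: norm_mult algebra_simps)
        then show ?thesis using bb Cpos by simp
      next
        case F1: False
        show ?thesis
        proof (cases "2 * j > n")
          case True
          then have "2 * (n - j) < n" using j by auto
          then have "norm (\<beta> j) + norm (\<beta> (n - j)) = real (n choose j) * (norm B2 + norm B1)"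
            unfolding \<beta>_def using True F1 cs by (simp add: norm_mult algebra_simps)
          then show ?thesis using bb Cpos by simp
        next
          case False
          then have e: "n - j = j" using F1 by auto
          have "norm (\<beta> j) + norm (\<beta> (n - j)) = real (n choose j) * norm (B1 + B2)"
            unfolding e \<beta>_def using False F1 by (simp add: norm_mult norm_divide)
          also have "\<dots> \<le> real (n choose j) * (norm B1 + norm B2)"
            using Cpos norm_triangle_ineq by (intro mult_left_mono) auto
          also have "\<dots> < real (n choose j)" using bb Cpos by simp
          finally show ?thesis .
        qed
      qed
    qed
  qed
  have Y0: "Y 0 = 0"
    unfolding Y_def F_def using Z by (simp add: vec_eq_iff)
  have Yl: "Y lam0 = y"
  proof (subst vec_eq_iff, rule allI)
    fix i
    define j where "j = idx i"
    have jr: "j \<in> {1..n}" unfolding j_def using idx_range[OF bij] .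
    have yi: "y $ i = coord idx y j" unfolding coord_def j_def using inv_idx[OF bij] by simp
    have "F lam0 j = coord idx y j"
    proof (cases "j = n")
      case True then show ?thesis unfolding F_def using V a3_def by simp
    next
      case False
      then have jj: "j \<in> {1..n-1}" using jr by auto
      show ?thesis unfolding F_def J_struct[OF n3 yJ jj] using False V unfolding a1_def a2_def by simp
    qed
    then show "Y lam0 $ i = y $ i" unfolding Y_def yi j_def by simp
  qed
  have l0: "lam0 \<in> ball 0 1" using nl T1lt T2lt by auto
  have mem: "(0, lam0) \<in> {(a, b). a \<in> ball 0 1 \<and> b \<in> ball 0 1 \<and>
                 (\<exists>g. holo_curve_on g (ball 0 1) \<and> g ` ball 0 1 \<subseteq> Gtilde n idx \<and> g a = 0 \<and> g b = y)}"
    using Y0 Yl l0 holY YG by auto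
  have "lempert (Gtilde n idx) 0 y \<le> ereal (hrho (fst (0, lam0)) (snd (0, lam0)))"
    unfolding lempert_def using INF_lower[OF mem, of "\<lambda>ab. ereal (hrho (fst ab) (snd ab))"] by simp
  then have le: "lempert (Gtilde n idx) 0 y \<le> ereal (artanh (norm lam0))" by (simp add: hrho_0)
  from nl show ?thesis
  proof
    assume "norm lam0 = T1 a1 a2 a3"
    then have "lempert (Gtilde n idx) 0 y \<le> ereal (artanh (TT n idx y 1))" using le TT1 by simp
    then show ?thesis using j1 by blast
  next
    assume "norm lam0 = T1 a2 a1 a3"
    then have "lempert (Gtilde n idx) 0 y \<le> ereal (artanh (TT n idx y (n - 1)))" using le TT2 by simp
    then show ?thesis using jn by blast
  qed
qed

theorem mainTheorem20:
  fixes n :: nat and idx :: "'n::finite \<Rightarrow> nat" and y :: "complex^'n"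
  assumes "n \<ge> 3"
    and "bij_betw idx (UNIV :: 'n set) {1..n}"
    and "y \<in> Jset n idx"
  shows "caratheodory (Gtilde n idx) 0 y = lempert (Gtilde n idx) 0 y
    \<and> lempert (Gtilde n idx) 0 y =
      ereal (Max ((\<lambda>j. artanh
        ((real (n choose j) * norm (coord idx y j - cnj (coord idx y (n - j)) * coord idx y n)
          + norm (coord idx y j * coord idx y (n - j) - (cbin n j)^2 * coord idx y n))
         / ((real (n choose j))^2 - (norm (coord idx y (n - j)))^2))) ` {1..n-1}))"
proof -
  note n3 = assms(1) and bij = assms(2) and yJ = assms(3)
  have yG: "y \<in> Gtilde n idx" using yJ unfolding Jset_def by blast
  define S where "S = (\<lambda>j. artanh (TT n idx y j)) ` {1..n-1}"
  have Seq: "(\<lambda>j. artanh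
        ((real (n choose j) * norm (coord idx y j - cnj (coord idx y (n - j)) * coord idx y n)
          + norm (coord idx y j * coord idx y (n - j) - (cbin n j)^2 * coord idx y n))
         / ((real (n choose j))^2 - (norm (coord idx y (n - j)))^2))) ` {1..n-1} = S"
    unfolding S_def TT_def ..
  have fin: "finite S" unfolding S_def by simp
  have ne: "S \<noteq> {}" unfolding S_def using n3 by auto
  have CM: "ereal (Max S) \<le> caratheodory (Gtilde n idx) 0 y"
  proof -
    have "Max S \<in> S" using Max_in[OF fin ne] .
    then obtain j where j: "j \<in> {1..n-1}" and e: "Max S = artanh (TT n idx y j)"
      unfolding S_def by blast
    show ?thesis unfolding e using cara_ge[OF yG j] .
  qed
  have LM: "lempert (Gtilde n idx) 0 y \<le> ereal (Max S)"
  proof -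
    obtain j where j: "j \<in> {1..n-1}" and le: "lempert (Gtilde n idx) 0 y \<le> ereal (artanh (TT n idx y j))"
      using lempert_le[OF n3 bij yJ] by blast
    have "artanh (TT n idx y j) \<le> Max S" using fin j unfolding S_def by (intro Max_ge) auto
    then show ?thesis using le by (meson ereal_less_eq(3) order_trans)
  qed
  have CL: "caratheodory (Gtilde n idx) 0 y \<le> lempert (Gtilde n idx) 0 y" by (rule cara_le_lempert)
  have "caratheodory (Gtilde n idx) 0 y = lempert (Gtilde n idx) 0 y" using CM LM CL by simp
  moreover have "lempert (Gtilde n idx) 0 y = ereal (Max S)" using CM LM CL by simp
  ultimately show ?thesis unfolding Seq by simp
qed

end
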